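(* Let $\Omega\subset\mathbb{R}^d$ be a bounded open set, $q\ge0$ an integer, $\lambda\in\mathbb{R}\setminus\{0\}$, $k\in C^q(\overline{\Omega}\times\overline{\Omega})$, $f\in C^q(\overline{\Omega})$. Let $X=\{x_1,\dots,x_n\}\subset\overline{\Omega}$ and $Y=\{y_1,\dots,y_m\}\subset\overline{\Omega}$ be finite sets, $\vec w\in\mathbb{R}^m$, and $R$ a real $m\times n$ matrix. Define $\mathcal{K}_{\vec h}\colon C^q(\overline{\Omega})\to C^q(\overline{\Omega})$ by $(\mathcal{K}_{\vec h}v)(x)=\sum_{i=1}^m w_i k(x,y_i)\sum_{j=1}^n R_{ij}v(x_j)$. Then the linear system $(\lambda I-KWR)\hat{\vec u}=f|_X$ has solutions if and only if the operator equation $(\lambda\mathcal{I}-\mathcal{K}_{\vec h})u_{\vec h}=f$ has solutions $u_{\vec h}\in C^q(\overline{\Omega})$. Moreover, if the two solution sets are nonempty, they are affine spaces of the same dimension.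
   Context: $C^q(\overline{\Omega})$ denotes functions whose partial derivatives up to order $q$ exist on $\Omega$ and extend continuously to $\overline{\Omega}$. $I$ is the $n\times n$ identity, $\mathcal{I}$ the identity operator, $K$ is the $n\times m$ matrix $K_{ij}=k(x_i,y_j)$, $W=\mathrm{diag}(\vec w)$, and $f|_X=(f(x_1),\dots,f(x_n))^T$. *)

theory Defs
  imports "HOL-Analysis.Analysis" "HOL-Library.Function_Algebras"
begin

fun iter_partial :: "'a::euclidean_space list \<Rightarrow> ('a \<Rightarrow> real) \<Rightarrow> 'a \<Rightarrow> real" where
  "iter_partial [] f = f"
| "iter_partial (b # bs) f = (\<lambda>x. deriv (\<lambda>t. iter_partial bs f (x + t *\<^sub>R b)) 0)"

definition Cq :: "nat \<Rightarrow> 'a::euclidean_space set \<Rightarrow> ('a \<Rightarrow> real) \<Rightarrow> bool" where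
  "Cq q \<Omega> f \<longleftrightarrow>
     continuous_on (closure \<Omega>) f \<and>
     (\<forall>bs. set bs \<subseteq> Basis \<and> length bs < q \<longrightarrow>
        (\<forall>b\<in>Basis. \<forall>x\<in>\<Omega>. (\<lambda>t. iter_partial bs f (x + t *\<^sub>R b)) differentiable (at 0))) \<and>
     (\<forall>bs. set bs \<subseteq> Basis \<and> length bs \<le> q \<longrightarrow>
        (\<exists>g. continuous_on (closure \<Omega>) g \<and> (\<forall>x\<in>\<Omega>. g x = iter_partial bs f x)))"

definition Kh :: "('a \<times> 'a \<Rightarrow> real) \<Rightarrow> ('m::finite \<Rightarrow> 'a) \<Rightarrow> real^'m \<Rightarrow> real^'n^'m
                  \<Rightarrow> ('n::finite \<Rightarrow> 'a) \<Rightarrow> ('a \<Rightarrow> real) \<Rightarrow> 'a \<Rightarrow> real" where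
  "Kh k y w R x v = (\<lambda>z. \<Sum>i\<in>UNIV. w$i * k (z, y i) * (\<Sum>j\<in>UNIV. R$i$j * v (x j)))"

definition fun_scale :: "real \<Rightarrow> ('a \<Rightarrow> real) \<Rightarrow> 'a \<Rightarrow> real" where
  "fun_scale c u = (\<lambda>x. c * u x)"

definition fun_affine :: "('a \<Rightarrow> real) set \<Rightarrow> bool" where
  "fun_affine A \<longleftrightarrow> (\<forall>u\<in>A. \<forall>v\<in>A. \<forall>t::real. (\<lambda>x. t * u x + (1 - t) * v x) \<in> A)"

definition fun_direction :: "('a \<Rightarrow> real) set \<Rightarrow> ('a \<Rightarrow> real) set" where
  "fun_direction A = {(\<lambda>x. u x - v x) | u v. u \<in> A \<and> v \<in> A}"

definition fun_finite_dim :: "('a \<Rightarrow> real) set \<Rightarrow> bool" where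
  "fun_finite_dim A \<longleftrightarrow> (\<exists>B. finite B \<and> fun_direction A \<subseteq> module.span fun_scale B)"

definition fun_aff_dim :: "('a \<Rightarrow> real) set \<Rightarrow> nat" where
  "fun_aff_dim A = vector_space.dim fun_scale (fun_direction A)"

end

theory Submission
  imports Defs
begin


lemma limit_deriv:
  fixes H G :: "'a::euclidean_space \<times> 'a \<Rightarrow> real"
  assumes op: "open \<Omega>" and bd: "bounded \<Omega>"
    and cH: "continuous_on (closure \<Omega> \<times> closure \<Omega>) H"
    and cG: "continuous_on (closure \<Omega> \<times> closure \<Omega>) G"
    and dv: "\<And>z y. z \<in> \<Omega> \<Longrightarrow> y \<in> \<Omega> \<Longrightarrow> ((\<lambda>t. H (z + t *\<^sub>R b, y)) has_real_derivative G (z, y)) (at 0)"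
    and z: "z \<in> \<Omega>" and y0: "y0 \<in> closure \<Omega>"
  shows "((\<lambda>t. H (z + t *\<^sub>R b, y0)) has_real_derivative G (z, y0)) (at 0)"
proof -
  let ?C = "closure \<Omega> \<times> closure \<Omega>"
  have "compact ?C" using bd by (simp add: compact_Times compact_closure)
  then have uc: "uniformly_continuous_on ?C G" using cG compact_uniformly_continuous by blast
  obtain r where r: "r > 0" "ball z r \<subseteq> \<Omega>" using op z open_contains_ball by blast
  have key: "\<exists>\<delta>>0. \<forall>t. \<bar>t\<bar> < \<delta> \<longrightarrow> \<bar>H (z + t *\<^sub>R b, y0) - H (z, y0) - t * G (z, y0)\<bar> \<le> e * \<bar>t\<bar>"
    if e: "e > 0" for e
  proof -
    obtain d1 where d1: "d1 > 0" "\<forall>p\<in>?C. \<forall>p'\<in>?C. dist p' p < d1 \<longrightarrow> dist (G p') (G p) < e"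
      using uc e unfolding uniformly_continuous_on_def by blast
    define \<delta> where "\<delta> = min r d1 / (norm b + 1)"
    have dpos: "\<delta> > 0" using d1 r unfolding \<delta>_def by (intro divide_pos_pos) (auto intro: add_nonneg_pos)
    have nb: "\<bar>s\<bar> * norm b < min r d1" if "\<bar>s\<bar> < \<delta>" for s
    proof -
      have "\<bar>s\<bar> * norm b \<le> \<bar>s\<bar> * (norm b + 1)" by (simp add: mult_left_mono)
      also have "\<dots> < \<delta> * (norm b + 1)" using that
        by (intro mult_strict_right_mono) (auto intro: add_nonneg_pos)
      also have "\<dots> = min r d1" unfolding \<delta>_def
        by (metis add_nonneg_pos norm_ge_zero zero_less_one less_irrefl nonzero_eq_divide_eq)
      finally show ?thesis .
    qed
    have inO: "z + s *\<^sub>R b \<in> \<Omega>" if "\<bar>s\<bar> < \<delta>" for s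
    proof -
      have "dist z (z + s *\<^sub>R b) = \<bar>s\<bar> * norm b" by (simp add: dist_norm)
      then show ?thesis using nb[OF that] r(2) by (auto simp: subset_eq)
    qed
    have onO: "\<bar>H (z + t *\<^sub>R b, y) - H (z, y) - t * G (z, y)\<bar> \<le> e * \<bar>t\<bar>"
      if t: "\<bar>t\<bar> < \<delta>" and y: "y \<in> \<Omega>" for t y
    proof -
      define \<phi> where "\<phi> s = H (z + s *\<^sub>R b, y) - s * G (z, y)" for s
      have der: "(\<phi> has_real_derivative (G (z + s *\<^sub>R b, y) - G (z, y))) (at s within ball 0 \<delta>)"
        if s: "s \<in> ball 0 \<delta>" for s
      proof -
        have sd: "\<bar>s\<bar> < \<delta>" using s by simp
        have "((\<lambda>u. H ((z + s *\<^sub>R b) + u *\<^sub>R b, y)) has_real_derivative G (z + s *\<^sub>R b, y)) (at 0)"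
          using dv[OF inO[OF sd] y] .
        moreover have "(\<lambda>u. H ((z + s *\<^sub>R b) + u *\<^sub>R b, y)) = (\<lambda>u. H (z + (u + s) *\<^sub>R b, y))"
          by (simp add: algebra_simps scaleR_add_left)
        ultimately have "((\<lambda>u. H (z + u *\<^sub>R b, y)) has_real_derivative G (z + s *\<^sub>R b, y)) (at (0 + s))"
          using DERIV_shift[where f = "\<lambda>u. H (z + u *\<^sub>R b, y)" and x = 0 and z = s] by simp
        then have "((\<lambda>u. H (z + u *\<^sub>R b, y)) has_real_derivative G (z + s *\<^sub>R b, y)) (at s)" by simp
        then have "(\<phi> has_real_derivative (G (z + s *\<^sub>R b, y) - G (z, y))) (at s)"
          unfolding \<phi>_def by (auto intro!: derivative_eq_intros)
        then show ?thesis by (simp add: has_field_derivative_at_within)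
      qed
      have bnd: "norm (G (z + s *\<^sub>R b, y) - G (z, y)) \<le> e" if s: "s \<in> ball 0 \<delta>" for s
      proof -
        have sd: "\<bar>s\<bar> < \<delta>" using s by simp
        have p1: "(z + s *\<^sub>R b, y) \<in> ?C" using inO[OF sd] y closure_subset by auto
        have p2: "(z, y) \<in> ?C" using z y closure_subset by auto
        have "dist (z + s *\<^sub>R b, y) (z, y) = \<bar>s\<bar> * norm b"
          by (simp add: dist_Pair_Pair dist_norm)
        then have "dist (z + s *\<^sub>R b, y) (z, y) < d1" using nb[OF sd] by simp
        then have "dist (G (z + s *\<^sub>R b, y)) (G (z, y)) < e" using d1(2) p1 p2 by blast
        then show ?thesis by (simp add: dist_norm)
      qed
      have "norm (\<phi> t - \<phi> 0) \<le> e * norm (t - 0)"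
        by (rule field_differentiable_bound[OF convex_ball der bnd]) (use t dpos in auto)
      then show ?thesis unfolding \<phi>_def by (simp add: algebra_simps)
    qed
    show ?thesis
    proof (intro exI[of _ \<delta>] conjI allI impI dpos)
      fix t assume t: "\<bar>t\<bar> < \<delta>"
      have zt: "z + t *\<^sub>R b \<in> closure \<Omega>" "z \<in> closure \<Omega>" using inO[OF t] z closure_subset by auto
      have "continuous_on (closure \<Omega>) (\<lambda>y. \<bar>H (z + t *\<^sub>R b, y) - H (z, y) - t * G (z, y)\<bar>)"
        using zt
        by (intro continuous_intros continuous_on_compose2[OF cH] continuous_on_compose2[OF cG]) auto
      then show "\<bar>H (z + t *\<^sub>R b, y0) - H (z, y0) - t * G (z, y0)\<bar> \<le> e * \<bar>t\<bar>"
        by (rule continuous_le_on_closure[OF _ y0]) (use onO t in auto)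
    qed
  qed
  show ?thesis unfolding has_field_derivative_iff
  proof (rule metric_LIM_I)
    fix e :: real assume e: "e > 0"
    obtain \<delta> where d: "\<delta> > 0" "\<forall>t. \<bar>t\<bar> < \<delta> \<longrightarrow> \<bar>H (z + t *\<^sub>R b, y0) - H (z, y0) - t * G (z, y0)\<bar> \<le> e/2 * \<bar>t\<bar>"
      using key[of "e/2"] e by auto
    show "\<exists>s>0. \<forall>t. t \<noteq> 0 \<and> dist t 0 < s \<longrightarrow>
        dist ((H (z + t *\<^sub>R b, y0) - H (z + 0 *\<^sub>R b, y0)) / (t - 0)) (G (z, y0)) < e"
    proof (intro exI[of _ \<delta>] conjI allI impI d(1))
      fix t :: real assume t: "t \<noteq> 0 \<and> dist t 0 < \<delta>"
      then have h: "\<bar>H (z + t *\<^sub>R b, y0) - H (z, y0) - t * G (z, y0)\<bar> \<le> e/2 * \<bar>t\<bar>" using d by auto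
      have "(H (z + t *\<^sub>R b, y0) - H (z, y0)) / t - G (z, y0) = (H (z + t *\<^sub>R b, y0) - H (z, y0) - t * G (z, y0)) / t"
        using t by (simp add: field_simps)
      then have "\<bar>(H (z + t *\<^sub>R b, y0) - H (z, y0)) / t - G (z, y0)\<bar> \<le> e/2"
        using h t by (simp add: abs_divide divide_le_eq mult.commute)
      then show "dist ((H (z + t *\<^sub>R b, y0) - H (z + 0 *\<^sub>R b, y0)) / (t - 0)) (G (z, y0)) < e"
        using e by (simp add: dist_real_def)
    qed
  qed
qed



definition HasD :: "nat \<Rightarrow> 'a::euclidean_space set \<Rightarrow> ('a \<Rightarrow> real) \<Rightarrow> ('a list \<Rightarrow> 'a \<Rightarrow> real) \<Rightarrow> bool" where
  "HasD q \<Omega> u D \<longleftrightarrow>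
     (\<forall>bs. set bs \<subseteq> Basis \<and> length bs \<le> q \<longrightarrow> continuous_on (closure \<Omega>) (D bs)) \<and>
     (\<forall>z\<in>\<Omega>. D [] z = u z) \<and>
     (\<forall>bs b z. set bs \<subseteq> Basis \<and> length bs < q \<and> b \<in> Basis \<and> z \<in> \<Omega> \<longrightarrow>
        ((\<lambda>t. D bs (z + t *\<^sub>R b)) has_real_derivative D (b # bs) z) (at 0))"

lemma transfer_deriv:
  fixes F D :: "'a::real_normed_vector \<Rightarrow> real"
  assumes "((\<lambda>t. D (z + t *\<^sub>R b)) has_real_derivative L) (at 0)"
    and "open \<Omega>" "z \<in> \<Omega>" "\<And>p. p \<in> \<Omega> \<Longrightarrow> D p = F p"
  shows "((\<lambda>t. F (z + t *\<^sub>R b)) has_real_derivative L) (at 0)"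
proof (rule has_field_derivative_transform_within_open[OF assms(1)])
  show "open ((\<lambda>t::real. z + t *\<^sub>R b) -` \<Omega>)"
    by (rule continuous_open_vimage[OF assms(2)]) (intro continuous_intros)
  show "0 \<in> (\<lambda>t::real. z + t *\<^sub>R b) -` \<Omega>" using assms(3) by simp
qed (use assms(4) in auto)

lemma HasD_iter:
  assumes op: "open \<Omega>" and h: "HasD q \<Omega> u D"
  shows "set bs \<subseteq> Basis \<Longrightarrow> length bs \<le> q \<Longrightarrow> z \<in> \<Omega> \<Longrightarrow> iter_partial bs u z = D bs z"
proof (induction bs arbitrary: z)
  case Nil
  then show ?case using h by (simp add: HasD_def)
next
  case (Cons b bs)
  have "((\<lambda>t. D bs (z + t *\<^sub>R b)) has_real_derivative D (b # bs) z) (at 0)"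
    using h Cons.prems unfolding HasD_def by auto
  then have "((\<lambda>t. iter_partial bs u (z + t *\<^sub>R b)) has_real_derivative D (b # bs) z) (at 0)"
    by (rule transfer_deriv[OF _ op Cons.prems(3)]) (use Cons.IH Cons.prems in auto)
  then show ?case by (simp add: DERIV_imp_deriv)
qed

lemma HasD_Cq:
  assumes op: "open \<Omega>" and c: "continuous_on (closure \<Omega>) u" and h: "HasD q \<Omega> u D"
  shows "Cq q \<Omega> u"
  unfolding Cq_def
proof (intro conjI allI impI ballI c)
  fix bs :: "'a list" and b z :: 'a assume bs: "set bs \<subseteq> Basis \<and> length bs < q" and b: "b \<in> Basis" and z: "z \<in> \<Omega>"
  have "((\<lambda>t. D bs (z + t *\<^sub>R b)) has_real_derivative D (b # bs) z) (at 0)"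
    using h bs b z unfolding HasD_def by auto
  then have "((\<lambda>t. iter_partial bs u (z + t *\<^sub>R b)) has_real_derivative D (b # bs) z) (at 0)"
    by (rule transfer_deriv[OF _ op z]) (use HasD_iter[OF op h] bs in auto)
  then show "(\<lambda>t. iter_partial bs u (z + t *\<^sub>R b)) differentiable at 0"
    using real_differentiable_def differentiableI by blast
next
  fix bs :: "'a list" assume bs: "set bs \<subseteq> Basis \<and> length bs \<le> q"
  show "\<exists>g. continuous_on (closure \<Omega>) g \<and> (\<forall>x\<in>\<Omega>. g x = iter_partial bs u x)"
    using HasD_iter[OF op h] bs h unfolding HasD_def by (intro exI[of _ "D bs"]) auto
qed

lemma Cq_HasD:
  assumes op: "open \<Omega>" and c: "Cq q \<Omega> f"
  shows "\<exists>D. HasD q \<Omega> f D"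
proof -
  define D where "D bs = (SOME g. continuous_on (closure \<Omega>) g \<and> (\<forall>x\<in>\<Omega>. g x = iter_partial bs f x))" for bs
  have D: "continuous_on (closure \<Omega>) (D bs) \<and> (\<forall>x\<in>\<Omega>. D bs x = iter_partial bs f x)"
    if "set bs \<subseteq> Basis" "length bs \<le> q" for bs
  proof -
    have ex: "\<exists>g. continuous_on (closure \<Omega>) g \<and> (\<forall>x\<in>\<Omega>. g x = iter_partial bs f x)"
      using c that unfolding Cq_def by blast
    show ?thesis unfolding D_def by (rule someI_ex[OF ex])
  qed
  have "HasD q \<Omega> f D"
    unfolding HasD_def
  proof (intro conjI allI impI ballI)
    fix bs :: "'a list" assume "set bs \<subseteq> Basis \<and> length bs \<le> q"
    then show "continuous_on (closure \<Omega>) (D bs)" using D by auto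
  next
    fix z assume "z \<in> \<Omega>" then show "D [] z = f z" using D[of "[]"] by simp
  next
    fix bs :: "'a list" and b z :: 'a assume a: "set bs \<subseteq> Basis \<and> length bs < q \<and> b \<in> Basis \<and> z \<in> \<Omega>"
    then have "(\<lambda>t. iter_partial bs f (z + t *\<^sub>R b)) differentiable at 0"
      using c unfolding Cq_def by auto
    then have "((\<lambda>t. iter_partial bs f (z + t *\<^sub>R b)) has_real_derivative iter_partial (b # bs) f z) (at 0)"
      using DERIV_deriv_iff_real_differentiable by force
    moreover have "iter_partial (b # bs) f z = D (b # bs) z" using D[of "b # bs"] a by auto
    ultimately have "((\<lambda>t. iter_partial bs f (z + t *\<^sub>R b)) has_real_derivative D (b # bs) z) (at 0)"
      by simp
    then show "((\<lambda>t. D bs (z + t *\<^sub>R b)) has_real_derivative D (b # bs) z) (at 0)"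
      by (rule transfer_deriv[OF _ op]) (use a D[of bs] in auto)
  qed
  then show ?thesis by blast
qed

lemma HasD_cong: "HasD q \<Omega> u D \<Longrightarrow> (\<And>z. z \<in> \<Omega> \<Longrightarrow> u z = v z) \<Longrightarrow> HasD q \<Omega> v D"
  unfolding HasD_def by auto

lemma HasD_lin:
  fixes \<Omega> :: "'a::euclidean_space set"
  assumes "HasD q \<Omega> u D" "HasD q \<Omega> v E"
  shows "HasD q \<Omega> (\<lambda>z. a * u z + c * v z) (\<lambda>bs z. a * D bs z + c * E bs z)"
  unfolding HasD_def
proof (intro conjI allI impI ballI)
  fix bs :: "'a list" and b z :: 'a
  assume a: "set bs \<subseteq> Basis \<and> length bs < q \<and> b \<in> Basis \<and> z \<in> \<Omega>"
  have h1: "((\<lambda>t. D bs (z + t *\<^sub>R b)) has_real_derivative D (b # bs) z) (at 0)"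
    using assms(1) a unfolding HasD_def by blast
  have h2: "((\<lambda>t. E bs (z + t *\<^sub>R b)) has_real_derivative E (b # bs) z) (at 0)"
    using assms(2) a unfolding HasD_def by blast
  show "((\<lambda>t. a * D bs (z + t *\<^sub>R b) + c * E bs (z + t *\<^sub>R b)) has_real_derivative
          a * D (b # bs) z + c * E (b # bs) z) (at 0)"
    using h1 h2 by (intro DERIV_add DERIV_cmult)
qed (use assms in \<open>auto simp: HasD_def intro!: continuous_intros\<close>)

lemma HasD_sum:
  fixes \<Omega> :: "'a::euclidean_space set"
  assumes "finite I" "\<And>i. i \<in> I \<Longrightarrow> HasD q \<Omega> (u i) (D i)"
  shows "HasD q \<Omega> (\<lambda>z. \<Sum>i\<in>I. u i z) (\<lambda>bs z. \<Sum>i\<in>I. D i bs z)"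
  unfolding HasD_def
proof (intro conjI allI impI ballI)
  fix bs :: "'a list" and b z :: 'a
  assume a: "set bs \<subseteq> Basis \<and> length bs < q \<and> b \<in> Basis \<and> z \<in> \<Omega>"
  have "((\<lambda>t. D i bs (z + t *\<^sub>R b)) has_real_derivative D i (b # bs) z) (at 0)" if "i \<in> I" for i
    using assms(2)[OF that] a unfolding HasD_def by blast
  then show "((\<lambda>t. \<Sum>i\<in>I. D i bs (z + t *\<^sub>R b)) has_real_derivative (\<Sum>i\<in>I. D i (b # bs) z)) (at 0)"
    by (rule DERIV_sum)
qed (use assms in \<open>auto simp: HasD_def intro!: continuous_intros\<close>)

lemma HasD_kernel:
  fixes k :: "'a::euclidean_space \<times> 'a \<Rightarrow> real"
  assumes op: "open \<Omega>" and bd: "bounded \<Omega>" and c: "Cq q (\<Omega> \<times> \<Omega>) k" and y0: "y0 \<in> closure \<Omega>"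
  shows "\<exists>D. HasD q \<Omega> (\<lambda>z. k (z, y0)) D"
proof -
  have op2: "open (\<Omega> \<times> \<Omega>)" using op by (simp add: open_Times)
  obtain Dk where Dk: "HasD q (\<Omega> \<times> \<Omega>) k Dk" using Cq_HasD[OF op2 c] by blast
  have cl: "closure (\<Omega> \<times> \<Omega>) = closure \<Omega> \<times> closure \<Omega>" by (rule closure_Times)
  define emb :: "'a \<Rightarrow> 'a \<times> 'a" where "emb b = (b, 0)" for b
  have embB: "set (map emb bs) \<subseteq> Basis" if "set bs \<subseteq> Basis" for bs
    using that by (auto simp: emb_def Basis_prod_def)
  have cont: "continuous_on (closure \<Omega> \<times> closure \<Omega>) (Dk (map emb bs))"
    if "set bs \<subseteq> Basis" "length bs \<le> q" for bs
    using Dk embB[OF that(1)] that(2) cl unfolding HasD_def by auto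
  have ck: "continuous_on (closure \<Omega> \<times> closure \<Omega>) k" using c cl unfolding Cq_def by auto
  have D0: "Dk [] p = k p" if p: "p \<in> closure \<Omega> \<times> closure \<Omega>" for p
  proof -
    have cc: "continuous_on (closure (\<Omega> \<times> \<Omega>)) (\<lambda>p. \<bar>Dk [] p - k p\<bar>)"
      using cont[of "[]"] ck cl by (auto intro!: continuous_intros)
    have "\<bar>Dk [] p - k p\<bar> \<le> 0"
      by (rule continuous_le_on_closure[OF cc]) (use p cl Dk in \<open>auto simp: HasD_def\<close>)
    then show ?thesis by simp
  qed
  define D where "D bs z = Dk (map emb bs) (z, y0)" for bs z
  have "HasD q \<Omega> (\<lambda>z. k (z, y0)) D"
    unfolding HasD_def
  proof (intro conjI allI impI ballI)
    fix bs :: "'a list" assume a: "set bs \<subseteq> Basis \<and> length bs \<le> q"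
    show "continuous_on (closure \<Omega>) (D bs)" unfolding D_def
      by (rule continuous_on_compose2[OF cont]) (use a y0 in \<open>auto intro!: continuous_intros\<close>)
  next
    fix z assume "z \<in> \<Omega>" then show "D [] z = k (z, y0)"
      unfolding D_def using D0 y0 closure_subset by auto
  next
    fix bs :: "'a list" and b z :: 'a assume a: "set bs \<subseteq> Basis \<and> length bs < q \<and> b \<in> Basis \<and> z \<in> \<Omega>"
    have "((\<lambda>t. Dk (map emb bs) (z + t *\<^sub>R b, y0)) has_real_derivative Dk (map emb (b # bs)) (z, y0)) (at 0)"
    proof (rule limit_deriv[OF op bd])
      show "continuous_on (closure \<Omega> \<times> closure \<Omega>) (Dk (map emb bs))" using a by (intro cont) auto
      show "continuous_on (closure \<Omega> \<times> closure \<Omega>) (Dk (map emb (b # bs)))" using a by (intro cont) auto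
      show "z \<in> \<Omega>" "y0 \<in> closure \<Omega>" using a y0 by auto
      fix z' y assume zy: "z' \<in> \<Omega>" "y \<in> \<Omega>"
      have "emb b \<in> Basis" using a by (auto simp: emb_def Basis_prod_def)
      moreover have hd: "\<forall>bs b z. set bs \<subseteq> Basis \<and> length bs < q \<and> b \<in> Basis \<and> z \<in> \<Omega> \<times> \<Omega> \<longrightarrow>
         ((\<lambda>t. Dk bs (z + t *\<^sub>R b)) has_real_derivative Dk (b # bs) z) (at 0)"
        using Dk unfolding HasD_def by blast
      ultimately have "((\<lambda>t. Dk (map emb bs) ((z', y) + t *\<^sub>R emb b)) has_real_derivative Dk (emb b # map emb bs) (z', y)) (at 0)"
        using embB[of bs] a zy by (intro hd[rule_format]) auto
      then show "((\<lambda>t. Dk (map emb bs) (z' + t *\<^sub>R b, y)) has_real_derivative Dk (map emb (b # bs)) (z', y)) (at 0)"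
        by (simp add: emb_def)
    qed
    then show "((\<lambda>t. D bs (z + t *\<^sub>R b)) has_real_derivative D (b # bs) z) (at 0)"
      unfolding D_def .
  qed
  then show ?thesis by blast
qed



lemma ifz_mult: "(if P then a else 0) * b = (if P then a * b else (0::real))" by simp
lemma mult_ifz: "b * (if P then a else 0) = (if P then b * a else (0::real))" by simp

lemma KWR_apply:
  fixes k :: "'a \<times> 'a \<Rightarrow> real" and x :: "'n::finite \<Rightarrow> 'a" and y :: "'m::finite \<Rightarrow> 'a"
    and w :: "real^'m" and R :: "real^'n^'m" and v :: "real^'n"
  shows "(((\<chi> i j. k (x i, y j)) :: real^'m^'n) ** ((\<chi> i j. if i = j then w$i else 0) :: real^'m^'m) ** R) *v v
      = (\<chi> j. \<Sum>i\<in>UNIV. w$i * k (x j, y i) * (\<Sum>l\<in>UNIV. R$i$l * v$l))"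
proof -
  have W: "((\<chi> i j. if i = j then w$i else 0) :: real^'m^'m) *v u = (\<chi> i. w$i * u$i)" for u
    by (simp add: vec_eq_iff matrix_vector_mult_def ifz_mult sum.delta)
  show ?thesis
    unfolding matrix_vector_mul_assoc[symmetric] W
    by (simp add: vec_eq_iff matrix_vector_mult_def mult.commute mult.left_commute mult.assoc)
qed

lemma Mv_apply:
  fixes A :: "real^'n::finite^'n"
  shows "(lam *\<^sub>R mat 1 - A) *v v = lam *\<^sub>R v - A *v v"
proof -
  have "(lam *\<^sub>R mat 1) *v v = lam *\<^sub>R v"
    by (simp add: vec_eq_iff matrix_vector_mult_def mat_def mult_ifz ifz_mult sum.delta)
  then show ?thesis by (simp add: matrix_vector_mult_diff_rdistrib)
qed



lemma vs_fun_scale: "vector_space (fun_scale :: real \<Rightarrow> ('a \<Rightarrow> real) \<Rightarrow> 'a \<Rightarrow> real)"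
  by unfold_locales (auto simp: fun_scale_def fun_eq_iff algebra_simps plus_fun_def)

lemma HasD_scale:
  fixes \<Omega> :: "'a::euclidean_space set"
  assumes "HasD q \<Omega> u D"
  shows "HasD q \<Omega> (\<lambda>z. a * u z) (\<lambda>bs z. a * D bs z)"
  unfolding HasD_def
proof (intro conjI allI impI ballI)
  fix bs :: "'a list" and b z :: 'a
  assume h: "set bs \<subseteq> Basis \<and> length bs < q \<and> b \<in> Basis \<and> z \<in> \<Omega>"
  have h1: "((\<lambda>t. D bs (z + t *\<^sub>R b)) has_real_derivative D (b # bs) z) (at 0)"
    using assms h unfolding HasD_def by blast
  then show "((\<lambda>t. a * D bs (z + t *\<^sub>R b)) has_real_derivative a * D (b # bs) z) (at 0)"
    by (intro DERIV_cmult)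
qed (use assms in \<open>auto simp: HasD_def intro!: continuous_intros\<close>)

lemma main_aux:
  fixes \<Omega> :: "'a::euclidean_space set"
    and q :: nat
    and lam :: real
    and k :: "'a \<times> 'a \<Rightarrow> real"
    and f :: "'a \<Rightarrow> real"
    and x :: "'n::finite \<Rightarrow> 'a"
    and y :: "'m::finite \<Rightarrow> 'a"
    and w :: "real^'m"
    and R :: "real^'n^'m"
  assumes bd: "bounded \<Omega>" and op: "open \<Omega>"
    and lam: "lam \<noteq> 0"
    and ck: "Cq q (\<Omega> \<times> \<Omega>) k"
    and cf: "Cq q \<Omega> f"
    and "inj x" and xO: "\<And>i. x i \<in> closure \<Omega>"
    and "inj y" and yO: "\<And>i. y i \<in> closure \<Omega>"
  defines "S \<equiv> {u :: real^'n. (lam *\<^sub>R mat 1 - ((\<chi> i j. k (x i, y j)) :: real^'m^'n) ** ((\<chi> i j. if i = j then w$i else 0) :: real^'m^'m) ** R) *v u = ((\<chi> i. f (x i)) :: real^'n)}"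
    and "T \<equiv> {u :: 'a \<Rightarrow> real. Cq q \<Omega> u \<and> (\<forall>z. z \<notin> closure \<Omega> \<longrightarrow> u z = 0) \<and>
                (\<forall>z\<in>closure \<Omega>. lam * u z - Kh k y w R x u z = f z)}"
  shows "(S \<noteq> {} \<longleftrightarrow> T \<noteq> {}) \<and>
        (S \<noteq> {} \<longrightarrow> affine S \<and> fun_affine T \<and> fun_finite_dim T \<and>
                     aff_dim S = int (fun_aff_dim T))"
proof -
  define K where "K = ((\<chi> i j. k (x i, y j)) :: real^'m^'n)"
  define W where "W = ((\<chi> i j. if i = j then w$i else 0) :: real^'m^'m)"
  define fX where "fX = ((\<chi> i. f (x i)) :: real^'n)"
  have S_def': "S = {u :: real^'n. (lam *\<^sub>R mat 1 - K ** W ** R) *v u = fX}"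
    unfolding S_def K_def W_def fX_def ..
  define L where "L v z = (\<Sum>i\<in>UNIV. w$i * k (z, y i) * (\<Sum>l\<in>UNIV. R$i$l * v$l))"
    for v :: "real^'n" and z
  define ev where "ev u = (\<chi> l. u (x l))" for u :: "'a \<Rightarrow> real"
  define \<Phi> where "\<Phi> v z = (if z \<in> closure \<Omega> then (f z + L v z) / lam else 0)" for v z
  define \<Psi> where "\<Psi> v z = (if z \<in> closure \<Omega> then L v z / lam else 0)" for v z
  have KWR: "(K ** W ** R) *v v = (\<chi> j. L v (x j))" for v
    unfolding K_def W_def L_def by (rule KWR_apply)
  have Sdef: "v \<in> S \<longleftrightarrow> (\<forall>j. lam * v$j - L v (x j) = f (x j))" for v
    unfolding S_def' fX_def by (simp add: Mv_apply KWR vec_eq_iff)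
  define N where "N = {d :: real^'n. (lam *\<^sub>R mat 1 - K ** W ** R) *v d = 0}"
  have Ndef: "d \<in> N \<longleftrightarrow> (\<forall>j. lam * d$j - L d (x j) = 0)" for d
    unfolding N_def by (simp add: Mv_apply KWR vec_eq_iff)
  have Kh: "Kh k y w R x u z = L (ev u) z" for u z unfolding Kh_def L_def ev_def by simp
  have Ladd: "L (a + b) z = L a z + L b z" for a b z
    unfolding L_def by (simp add: algebra_simps sum.distrib)
  have Lscale: "L (c *\<^sub>R a) z = c * L a z" for c a z
    unfolding L_def by (simp add: algebra_simps sum_distrib_left)
  have Ldiff: "L (a - b) z = L a z - L b z" for a b z
    unfolding L_def by (simp add: algebra_simps sum_subtractf)
  obtain Df where Df: "HasD q \<Omega> f Df" using Cq_HasD[OF op cf] by blast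
  have "\<forall>i. \<exists>D. HasD q \<Omega> (\<lambda>z. k (z, y i)) D" using HasD_kernel[OF op bd ck yO] by blast
  then obtain Dk where Dk: "\<And>i. HasD q \<Omega> (\<lambda>z. k (z, y i)) (Dk i)" by metis
  have cfc: "continuous_on (closure \<Omega>) f" using cf unfolding Cq_def by blast
  have ckc: "continuous_on (closure \<Omega>) (\<lambda>z. k (z, y i))" for i
  proof -
    have "continuous_on (closure \<Omega> \<times> closure \<Omega>) k" using ck closure_Times unfolding Cq_def by metis
    then show ?thesis
      by (rule continuous_on_compose2) (use yO in \<open>auto intro!: continuous_intros\<close>)
  qed
  have PhiCq: "Cq q \<Omega> (\<Phi> v)" for v
  proof -
    define g where "g z = (1/lam) * f z + (1/lam) * (\<Sum>i\<in>UNIV. (w$i * (\<Sum>l\<in>UNIV. R$i$l * v$l)) * k (z, y i))" for z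
    have eq: "g z = \<Phi> v z" if "z \<in> closure \<Omega>" for z
      using that unfolding g_def \<Phi>_def L_def
      by (simp add: add_divide_distrib mult.commute mult.left_commute mult.assoc)
    have "HasD q \<Omega> g (\<lambda>bs z. (1/lam) * Df bs z + (1/lam) * (\<Sum>i\<in>UNIV. (w$i * (\<Sum>l\<in>UNIV. R$i$l * v$l)) * Dk i bs z))"
      unfolding g_def by (intro HasD_lin HasD_sum HasD_scale Df Dk) auto
    then have h: "HasD q \<Omega> (\<Phi> v) (\<lambda>bs z. (1/lam) * Df bs z + (1/lam) * (\<Sum>i\<in>UNIV. (w$i * (\<Sum>l\<in>UNIV. R$i$l * v$l)) * Dk i bs z))"
      by (rule HasD_cong) (use eq closure_subset in auto)
    have "continuous_on (closure \<Omega>) g"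
      unfolding g_def by (intro continuous_intros cfc ckc)
    then have "continuous_on (closure \<Omega>) (\<Phi> v)"
      by (rule continuous_on_cong[THEN iffD1, rotated 2]) (use eq in auto)
    then show ?thesis by (rule HasD_Cq[OF op _ h])
  qed
  have evPhi: "ev (\<Phi> v) = v" if "v \<in> S" for v
  proof -
    have "\<Phi> v (x j) = v$j" for j
      using Sdef[of v] that xO[of j] lam unfolding \<Phi>_def
      by (simp add: field_simps)
    then show ?thesis unfolding ev_def by (simp add: vec_eq_iff)
  qed
  have PhiT: "\<Phi> v \<in> T" if "v \<in> S" for v
    unfolding T_def using PhiCq evPhi[OF that] lam by (auto simp: Kh \<Phi>_def)
  have Tev: "ev u \<in> S" if "u \<in> T" for u
    using that xO unfolding Sdef T_def by (auto simp: Kh ev_def)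
  have TPhi: "u = \<Phi> (ev u)" if "u \<in> T" for u
  proof
    fix z show "u z = \<Phi> (ev u) z"
    proof (cases "z \<in> closure \<Omega>")
      case True
      then have "lam * u z - L (ev u) z = f z" using that unfolding T_def by (auto simp: Kh)
      then show ?thesis using True lam unfolding \<Phi>_def by (simp add: field_simps)
    next
      case False then show ?thesis using that unfolding T_def \<Phi>_def by auto
    qed
  qed
  have T_eq: "T = \<Phi> ` S"
  proof
    show "T \<subseteq> \<Phi> ` S" using TPhi Tev by blast
    show "\<Phi> ` S \<subseteq> T" using PhiT by blast
  qed
  have affS: "affine S"
    unfolding affine_def
  proof (intro ballI allI impI)
    fix u v :: "real^'n" and a b :: real assume u: "u \<in> S" and v: "v \<in> S" and ab: "a + b = 1"
    show "a *\<^sub>R u + b *\<^sub>R v \<in> S" unfolding Sdef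
    proof
      fix j
      have "lam * (a *\<^sub>R u + b *\<^sub>R v)$j - L (a *\<^sub>R u + b *\<^sub>R v) (x j)
          = a * (lam * u$j - L u (x j)) + b * (lam * v$j - L v (x j))"
        by (simp add: Ladd Lscale algebra_simps)
      also have "\<dots> = (a + b) * f (x j)" using u v unfolding Sdef by (simp add: algebra_simps)
      finally show "lam * (a *\<^sub>R u + b *\<^sub>R v)$j - L (a *\<^sub>R u + b *\<^sub>R v) (x j) = f (x j)"
        using ab by simp
    qed
  qed
  have part2: "affine S \<and> fun_affine T \<and> fun_finite_dim T \<and> aff_dim S = int (fun_aff_dim T)"
    if ne: "S \<noteq> {}"
  proof -
    obtain a0 where a0: "a0 \<in> S" using ne by blast
    have fa: "fun_affine T"
      unfolding fun_affine_def
    proof (intro ballI allI)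
      fix u v t assume u: "u \<in> T" and v: "v \<in> T"
      have "(\<lambda>z. t * u z + (1 - t) * v z) = \<Phi> (t *\<^sub>R ev u + (1 - t) *\<^sub>R ev v)"
      proof
        fix z show "t * u z + (1 - t) * v z = \<Phi> (t *\<^sub>R ev u + (1 - t) *\<^sub>R ev v) z"
          apply (subst TPhi[OF u], subst TPhi[OF v])
          using lam by (simp only: \<Phi>_def Ladd Lscale) (simp add: field_simps)
      qed
      moreover have "t *\<^sub>R ev u + (1 - t) *\<^sub>R ev v \<in> S"
        using affS Tev[OF u] Tev[OF v] unfolding affine_def by simp
      ultimately show "(\<lambda>z. t * u z + (1 - t) * v z) \<in> T" using PhiT by simp
    qed
    have dirT: "fun_direction T = \<Psi> ` N"
    proof
      show "fun_direction T \<subseteq> \<Psi> ` N"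
      proof
        fix g assume "g \<in> fun_direction T"
        then obtain u v where uv: "u \<in> T" "v \<in> T" "g = (\<lambda>z. u z - v z)" unfolding fun_direction_def by blast
        have "g = \<Psi> (ev u - ev v)"
          unfolding uv(3) apply (subst TPhi[OF uv(1)], subst TPhi[OF uv(2)])
          using lam by (auto simp: fun_eq_iff \<Phi>_def \<Psi>_def Ldiff field_simps)
        moreover have "ev u - ev v \<in> N"
          using Tev[OF uv(1)] Tev[OF uv(2)] unfolding Sdef Ndef by (simp add: Ldiff algebra_simps)
        ultimately show "g \<in> \<Psi> ` N" by blast
      qed
      show "\<Psi> ` N \<subseteq> fun_direction T"
      proof
        fix g assume "g \<in> \<Psi> ` N"
        then obtain d where d: "d \<in> N" "g = \<Psi> d" by blast
        have s: "a0 + d \<in> S" using a0 d(1) unfolding Sdef Ndef by (simp add: Ladd algebra_simps)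
        have "g = (\<lambda>z. \<Phi> (a0 + d) z - \<Phi> a0 z)"
          unfolding d(2) using lam by (auto simp: fun_eq_iff \<Phi>_def \<Psi>_def Ladd field_simps)
        then show "g \<in> fun_direction T" unfolding fun_direction_def using PhiT[OF s] PhiT[OF a0] by blast
      qed
    qed
    interpret fs: vector_space "fun_scale :: real \<Rightarrow> ('a \<Rightarrow> real) \<Rightarrow> 'a \<Rightarrow> real" by (rule vs_fun_scale)
    have linPsi: "Vector_Spaces.linear (scaleR :: real \<Rightarrow> real^'n \<Rightarrow> real^'n) fun_scale \<Psi>"
      unfolding Vector_Spaces.linear_iff
    proof (intro conjI allI)
      show "vector_space (scaleR :: real \<Rightarrow> real^'n \<Rightarrow> real^'n)"
        by unfold_locales (auto simp: algebra_simps)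
      show "vector_space (fun_scale :: real \<Rightarrow> ('a \<Rightarrow> real) \<Rightarrow> 'a \<Rightarrow> real)" by (rule vs_fun_scale)
      show "\<Psi> (a + b) = \<Psi> a + \<Psi> b" for a b
        by (auto simp: fun_eq_iff \<Psi>_def Ladd add_divide_distrib)
      show "\<Psi> (c *\<^sub>R a) = fun_scale c (\<Psi> a)" for c a
        by (auto simp: fun_eq_iff \<Psi>_def Lscale fun_scale_def)
    qed
    interpret lP: Vector_Spaces.linear "scaleR :: real \<Rightarrow> real^'n \<Rightarrow> real^'n" fun_scale \<Psi> by (rule linPsi)
    interpret fsp: finite_dimensional_vector_space_pair_1 "scaleR :: real \<Rightarrow> real^'n \<Rightarrow> real^'n" Basis
      "fun_scale :: real \<Rightarrow> ('a \<Rightarrow> real) \<Rightarrow> 'a \<Rightarrow> real" ..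
    have ffd: "fun_finite_dim T"
      unfolding fun_finite_dim_def
    proof (intro exI conjI)
      show "finite (\<Psi> ` (Basis :: (real^'n) set))" by simp
      have sp: "module.span (*\<^sub>R) (Basis::(real^'n) set) = UNIV"
        using span_Basis by (simp add: span_raw_def)
      have "fs.span (\<Psi> ` Basis) = range \<Psi>" using lP.span_image[of Basis] sp by simp
      then show "fun_direction T \<subseteq> fs.span (\<Psi> ` Basis)" using dirT by auto
    qed
    have subN: "subspace N"
    proof -
      have L0: "L 0 z = 0" for z unfolding L_def by simp
      show ?thesis unfolding subspace_def
        by (auto simp: Ndef Ladd Lscale L0 algebra_simps)
    qed
    have spanN: "span N = N" using subN by (simp add: span_eq_iff)
    have injN: "inj_on \<Psi> (span N)"
      unfolding spanN
    proof (rule inj_onI)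
      fix d1 d2 assume d: "d1 \<in> N" "d2 \<in> N" "\<Psi> d1 = \<Psi> d2"
      have "d$j = \<Psi> d (x j)" if "d \<in> N" for d j
        using that xO[of j] lam unfolding Ndef \<Psi>_def by (auto simp: field_simps)
      then show "d1 = d2" using d by (simp add: vec_eq_iff)
    qed
    have "fun_aff_dim T = fs.dim (\<Psi> ` N)" unfolding fun_aff_dim_def dirT ..
    also have "\<dots> = dim N" using fsp.dim_image_eq[OF linPsi] injN by (simp add: dim_raw_def span_raw_def)
    finally have fd: "fun_aff_dim T = dim N" .
    have "(\<lambda>v. v - a0) ` S = N"
    proof
      show "(\<lambda>v. v - a0) ` S \<subseteq> N"
        using a0 by (auto simp: Sdef Ndef Ldiff algebra_simps)
      show "N \<subseteq> (\<lambda>v. v - a0) ` S"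
      proof
        fix d assume d: "d \<in> N"
        have "d + a0 \<in> S" using a0 d unfolding Sdef Ndef by (simp add: Ladd algebra_simps)
        then show "d \<in> (\<lambda>v. v - a0) ` S" by (rule rev_image_eqI) simp
      qed
    qed
    then have "aff_dim S = int (dim N)"
      using aff_dim_eq_dim_subtract[of a0 S] a0 hull_inc by metis
    then show ?thesis using affS fa ffd fd by simp
  qed
  show ?thesis using T_eq part2 by blast
qed


theorem proposition3p7:
  fixes \<Omega> :: "'a::euclidean_space set"
    and q :: nat
    and lam :: real
    and k :: "'a \<times> 'a \<Rightarrow> real"
    and f :: "'a \<Rightarrow> real"
    and x :: "'n::finite \<Rightarrow> 'a"
    and y :: "'m::finite \<Rightarrow> 'a"
    and w :: "real^'m"
    and R :: "real^'n^'m"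
  assumes "bounded \<Omega>" and "open \<Omega>"
    and "lam \<noteq> 0"
    and "Cq q (\<Omega> \<times> \<Omega>) k"
    and "Cq q \<Omega> f"
    and "inj x" and "\<And>i. x i \<in> closure \<Omega>"
    and "inj y" and "\<And>i. y i \<in> closure \<Omega>"
  shows
    "let K = (\<chi> i j. k (x i, y j)) :: real^'m^'n;
         W = (\<chi> i j. if i = j then w$i else 0) :: real^'m^'m;
         fX = (\<chi> i. f (x i)) :: real^'n;
         S = {u :: real^'n. (lam *\<^sub>R mat 1 - K ** W ** R) *v u = fX};
         T = {u :: 'a \<Rightarrow> real. Cq q \<Omega> u \<and> (\<forall>z. z \<notin> closure \<Omega> \<longrightarrow> u z = 0) \<and>
                (\<forall>z\<in>closure \<Omega>. lam * u z - Kh k y w R x u z = f z)}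
     in (S \<noteq> {} \<longleftrightarrow> T \<noteq> {}) \<and>
        (S \<noteq> {} \<longrightarrow> affine S \<and> fun_affine T \<and> fun_finite_dim T \<and>
                     aff_dim S = int (fun_aff_dim T))"
    unfolding Let_def by (rule main_aux[OF assms])

end
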